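(* Let $\mathcal{Z}$ be a finite set with probability distribution $\{p_z\}_{z\in\mathcal{Z}}$, let $\rho_z$ ($z\in\mathcal{Z}$) be density matrices on a finite-dimensional Hilbert space $\mathcal{H}^Q$, and let $\langle\rho\rangle=\sum_z p_z\rho_z$. For an integer $M\ge1$ define the states on $(\mathbb{C}^{|\mathcal{Z}|}\otimes\mathcal{H}^Q)^{\otimes M}$ $$\rho_{1,M}=\Big(\sum_z p_z|z\rangle\langle z|\otimes\rho_z\Big)^{\otimes M},\qquad \rho_{2,M}=\Big(\sum_z p_z|z\rangle\langle z|\otimes\langle\rho\rangle\Big)^{\otimes M},$$ which represent coherent access to $M$ independent samples from the ensemble $\mathcal{E}_1=\{(p_z,\rho_z)\}$ and from $\mathcal{E}_2=\{(p_z,\langle\rho\rangle)\}$ respectively (labels stored in classical registers, states in quantum registers). Suppose one of the two is given, each with prior probability $1/2$, and a simulation-free strategy, i.e. a two-outcome POVM $\{E_1,E_2=\mathbb{I}-E_1\}$ satisfying $(\pi_\tau^{\otimes M}\otimes\mathbb{I}_Q)E_1(\pi_\tau^{\otimes M}\otimes\mathbb{I}_Q)^\dagger=E_1$ for every permutation $\tau$ of $\mathcal{Z}$, is used to guess which (outcome $j$ means guessing $\mathcal{E}_j$). Then the success probability $p_{\rm succ}=\tfrac12\operatorname{Tr}[E_1\rho_{1,M}]+\tfrac12\operatorname{Tr}[E_2\rho_{2,M}]$ satisfies $$p_{\rm succ}\le\frac12+M^2\sum_{z\in\mathcal{Z}}p_z^2.$$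
   Context: $\pi_\tau$ is the permutation operator on a single classical register $\mathbb{C}^{|\mathcal{Z}|}$ with $\pi_\tau|z\rangle=|\tau(z)\rangle$, acting on each of the $M$ classical registers, and $\mathbb{I}_Q$ is the identity on all $M$ quantum registers. The POVM may be an arbitrary joint measurement on all $M$ classical and quantum registers (including entangled, adaptive or stochastic strategies); "simulation-free" means the strategy treats all labels $z$ symmetrically, as encoded by the permutation-invariance condition. *)

theory Defs
  imports Complex_Main "HOL-Library.FuncSet"
begin

text \<open>Operators on a finite-dimensional space with orthonormal basis indexed by a
finite set I are represented as functions I \<Rightarrow> I \<Rightarrow> complex (matrix entries);
only entries with both indices in I are meaningful.\<close>

definition mmult :: "'i set \<Rightarrow> ('i \<Rightarrow> 'i \<Rightarrow> complex) \<Rightarrow> ('i \<Rightarrow> 'i \<Rightarrow> complex) \<Rightarrow> ('i \<Rightarrow> 'i \<Rightarrow> complex)" where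
  "mmult I A B = (\<lambda>i k. \<Sum>j\<in>I. A i j * B j k)"

definition adjoint :: "('i \<Rightarrow> 'i \<Rightarrow> complex) \<Rightarrow> ('i \<Rightarrow> 'i \<Rightarrow> complex)" where
  "adjoint A = (\<lambda>i j. cnj (A j i))"

definition idop :: "'i \<Rightarrow> 'i \<Rightarrow> complex" where
  "idop = (\<lambda>i j. if i = j then 1 else 0)"

definition trace :: "'i set \<Rightarrow> ('i \<Rightarrow> 'i \<Rightarrow> complex) \<Rightarrow> complex" where
  "trace I A = (\<Sum>i\<in>I. A i i)"

text \<open>Positive semidefinite: the quadratic form is real and nonnegative for every vector
(over the complex numbers this also forces the operator to be Hermitian).\<close>
definition psd :: "'i set \<Rightarrow> ('i \<Rightarrow> 'i \<Rightarrow> complex) \<Rightarrow> bool" where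
  "psd I A \<longleftrightarrow> (\<forall>v :: 'i \<Rightarrow> complex.
      Im (\<Sum>i\<in>I. \<Sum>j\<in>I. cnj (v i) * A i j * v j) = 0 \<and>
      Re (\<Sum>i\<in>I. \<Sum>j\<in>I. cnj (v i) * A i j * v j) \<ge> 0)"

definition density :: "'i set \<Rightarrow> ('i \<Rightarrow> 'i \<Rightarrow> complex) \<Rightarrow> bool" where
  "density I \<rho> \<longleftrightarrow> psd I \<rho> \<and> trace I \<rho> = 1"

text \<open>Basis of (C^Z \<otimes> H^Q)^{\<otimes>M}: functions from the register positions {..<M}
to pairs (classical label, basis index of H^Q).\<close>
abbreviation basisM :: "nat \<Rightarrow> (nat \<Rightarrow> 'z \<times> 'q) set" where
  "basisM M \<equiv> PiE {..<M} (\<lambda>_. UNIV)"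

definition tensor_pow :: "nat \<Rightarrow> ('a \<Rightarrow> 'a \<Rightarrow> complex) \<Rightarrow> ((nat \<Rightarrow> 'a) \<Rightarrow> (nat \<Rightarrow> 'a) \<Rightarrow> complex)" where
  "tensor_pow M A = (\<lambda>f g. \<Prod>i<M. A (f i) (g i))"

text \<open>Classical-quantum state \<Sum>_z p_z |z><z| \<otimes> \<sigma>_z on C^Z \<otimes> H^Q.\<close>
definition cq_state :: "('z \<Rightarrow> real) \<Rightarrow> ('z \<Rightarrow> 'q \<Rightarrow> 'q \<Rightarrow> complex) \<Rightarrow> ('z \<times> 'q) \<Rightarrow> ('z \<times> 'q) \<Rightarrow> complex" where
  "cq_state p \<sigma> = (\<lambda>(z, a) (z', b). if z = z' then complex_of_real (p z) * \<sigma> z a b else 0)"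

definition avg_state :: "('z::finite \<Rightarrow> real) \<Rightarrow> ('z \<Rightarrow> 'q \<Rightarrow> 'q \<Rightarrow> complex) \<Rightarrow> 'q \<Rightarrow> 'q \<Rightarrow> complex" where
  "avg_state p \<rho> = (\<lambda>a b. \<Sum>z\<in>UNIV. complex_of_real (p z) * \<rho> z a b)"

text \<open>The operator \<pi>_\<tau>^{\<otimes>M} \<otimes> I_Q : |f> \<mapsto> |\<tau>\<cdot>f>, where \<tau> acts on every classical register.\<close>
definition relabel :: "nat \<Rightarrow> ('z \<Rightarrow> 'z) \<Rightarrow> (nat \<Rightarrow> 'z \<times> 'q) \<Rightarrow> (nat \<Rightarrow> 'z \<times> 'q)" where
  "relabel M \<tau> f = restrict (\<lambda>i. (\<tau> (fst (f i)), snd (f i))) {..<M}"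

definition perm_op :: "nat \<Rightarrow> ('z \<Rightarrow> 'z) \<Rightarrow> (nat \<Rightarrow> 'z \<times> 'q) \<Rightarrow> (nat \<Rightarrow> 'z \<times> 'q) \<Rightarrow> complex" where
  "perm_op M \<tau> = (\<lambda>f g. if f = relabel M \<tau> g then 1 else 0)"

end

theory Submission
  imports Defs
begin


definition qform :: "'i set \<Rightarrow> ('i \<Rightarrow> 'i \<Rightarrow> complex) \<Rightarrow> ('i \<Rightarrow> complex) \<Rightarrow> complex" where
  "qform I A v = (\<Sum>i\<in>I. \<Sum>j\<in>I. cnj (v i) * A i j * v j)"

lemma psd_qform: "psd I A \<longleftrightarrow> (\<forall>v. Im (qform I A v) = 0 \<and> Re (qform I A v) \<ge> 0)"
  unfolding psd_def qform_def by simp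

lemma psd_qform_real: "psd I A \<Longrightarrow> qform I A v = of_real (Re (qform I A v))"
  by (simp add: psd_qform complex_eq_iff)

lemma qform_restrict:
  assumes "finite I" "J \<subseteq> I"
  shows "qform I A (\<lambda>x. if x \<in> J then v x else 0) = qform J A v"
proof -
  have "qform I A (\<lambda>x. if x \<in> J then v x else 0) =
     (\<Sum>i\<in>I. if i \<in> J then (\<Sum>j\<in>I. if j \<in> J then cnj (v i) * A i j * v j else 0) else 0)"
    unfolding qform_def by (intro sum.cong refl) (auto intro!: sum.cong)
  also have "\<dots> = qform J A v"
    unfolding qform_def using assms
    by (simp add: sum.If_cases Int_absorb1 Int_absorb2 flip: Int_def)
  finally show ?thesis .
qed

lemma psd_subset: "finite I \<Longrightarrow> J \<subseteq> I \<Longrightarrow> psd I A \<Longrightarrow> psd J A"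
  unfolding psd_qform by (metis qform_restrict)

lemma qform_two:
  assumes "finite I" "i \<in> I" "j \<in> I" "i \<noteq> j"
  shows "qform I A (\<lambda>x. if x = i then a else if x = j then b else 0) =
    cnj a * A i i * a + cnj a * A i j * b + cnj b * A j i * a + cnj b * A j j * b"
proof -
  have "qform I A (\<lambda>x. if x = i then a else if x = j then b else 0) = qform {i,j} A (\<lambda>x. if x = i then a else if x = j then b else 0)"
    using qform_restrict[OF assms(1), of "{i,j}" A "\<lambda>x. if x = i then a else if x = j then b else 0"] assms
    by (smt (verit) empty_subsetI insert_iff insert_subset qform_def sum.cong)
  also have "\<dots> = cnj a * A i i * a + cnj a * A i j * b + cnj b * A j i * a + cnj b * A j j * b" using assms(4) unfolding qform_def by (simp add: algebra_simps)
  finally show ?thesis .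
qed

lemma qform_one:
  assumes "finite I" "i \<in> I"
  shows "qform I A (\<lambda>x. if x = i then a else 0) = cnj a * A i i * a"
proof -
  have "qform I A (\<lambda>x. if x = i then a else 0) = qform {i} A (\<lambda>x. if x = i then a else 0)"
    using qform_restrict[OF assms(1), of "{i}" A "\<lambda>x. if x = i then a else 0"] assms
    by (smt (verit) empty_subsetI insert_iff insert_subset qform_def sum.cong)
  also have "\<dots> = cnj a * A i i * a" unfolding qform_def by simp
  finally show ?thesis .
qed

lemma psd_diag:
  assumes "finite I" "psd I A" "i \<in> I"
  shows "A i i = of_real (Re (A i i))" "Re (A i i) \<ge> 0"
  using psd_qform_real[OF assms(2), of "\<lambda>x. if x = i then 1 else 0"] assms(2)
    qform_one[OF assms(1,3), of A 1] unfolding psd_qform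
  by (auto simp: complex_eq_iff) (metis)

lemma psd_herm:
  assumes "finite I" "psd I A" "i \<in> I" "j \<in> I"
  shows "A j i = cnj (A i j)"
proof (cases "i = j")
  case True then show ?thesis using psd_diag[OF assms(1-3)] by (simp add: complex_eq_iff)
next
  case False
  have d1: "Im (A i i) = 0" "Im (A j j) = 0" using psd_diag[OF assms(1,2)] assms(3,4)
    by (metis Im_complex_of_real)+
  have "Im (qform I A (\<lambda>x. if x = i then 1 else if x = j then 1 else 0)) = 0"
    using assms(2) unfolding psd_qform by blast
  then have h1: "Im (A i j) + Im (A j i) = 0"
    using qform_two[OF assms(1,3,4) False, of A 1 1] d1 by simp
  have "Im (qform I A (\<lambda>x. if x = i then 1 else if x = j then \<i> else 0)) = 0"
    using assms(2) unfolding psd_qform by blast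
  then have h2: "Re (A i j) - Re (A j i) = 0"
    using qform_two[OF assms(1,3,4) False, of A 1 \<i>] d1 by simp
  show ?thesis using h1 h2 by (simp add: complex_eq_iff)
qed

lemma sum_if_const: "(\<Sum>j\<in>I. if P then f j else 0) = (if P then sum f I else 0)"
  by (cases P) auto

lemma qform_shift:
  assumes "finite I" "i \<in> I"
  shows "qform I A (\<lambda>x. v x + (if x = i then b else 0)) =
    qform I A v + b * (\<Sum>x\<in>I. cnj (v x) * A x i) + cnj b * (\<Sum>y\<in>I. A i y * v y) + cnj b * b * A i i"
proof -
  have e: "cnj (v x + (if x = i then b else 0)) * A x y * (v y + (if y = i then b else 0)) =
     cnj (v x) * A x y * v y + (if y = i then b * (cnj (v x) * A x i) else 0)
     + (if x = i then cnj b * (A i y * v y) else 0)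
     + (if x = i then (if y = i then cnj b * b * A i i else 0) else 0)" for x y
    by (cases "x = i"; cases "y = i") (simp_all add: algebra_simps)
  show ?thesis unfolding qform_def e sum.distrib
    using assms by (simp add: sum_distrib_left sum_if_const)
qed
lemma qform_minus_outer:
  "qform I (\<lambda>x y. A x y - w x * cnj (w y)) v =
   qform I A v - (\<Sum>x\<in>I. cnj (v x) * w x) * (\<Sum>y\<in>I. cnj (w y) * v y)"
  unfolding qform_def sum_product sum_subtractf[symmetric] right_diff_distrib left_diff_distrib
  by (intro sum.cong refl) (simp add: mult.assoc mult.left_commute)

lemma psd_zero_row:
  assumes "finite I" "psd I A" "i \<in> I" "j \<in> I" "A i i = 0"
  shows "A i j = 0"
proof (rule ccontr)
  assume nz: "A i j \<noteq> 0"
  then have ij: "i \<noteq> j" using assms by auto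
  define a where "a = A i j"
  have h: "A j i = cnj a" using psd_herm[OF assms(1,2,3,4)] a_def by simp
  define n where "n = (Re a)^2 + (Im a)^2"
  have npos: "n > 0" using nz unfolding n_def a_def
    by (simp add: complex_eq_iff sum_power2_gt_zero_iff)
  define s where "s = (Re (A j j) + 1) / (2 * n)"
  define t where "t = - of_real s * a"
  have "Re (qform I A (\<lambda>x. if x = i then t else if x = j then 1 else 0)) \<ge> 0"
    using assms(2) unfolding psd_qform by blast
  then have "0 \<le> Re (cnj t * a + cnj a * t + A j j)"
    using qform_two[OF assms(1,3,4) ij, of A t 1] assms(5) h a_def by simp
  then have "0 \<le> Re (A j j) - 2 * s * n"
    unfolding t_def n_def by (simp add: algebra_simps power2_eq_square)
  moreover have "2 * s * n = Re (A j j) + 1" unfolding s_def using npos by simp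
  ultimately show False by simp
qed
lemma psd_schur:
  assumes "finite I" "psd I A" "i \<in> I" "Re (A i i) > 0"
  defines "w \<equiv> (\<lambda>x. A x i / of_real (sqrt (Re (A i i))))"
  shows "psd I (\<lambda>x y. A x y - w x * cnj (w y))"
  unfolding psd_qform
proof
  fix v
  define d where "d = Re (A i i)"
  have dpos: "d > 0" using assms(4) d_def by simp
  have Aii: "A i i = of_real d" using psd_diag(1)[OF assms(1-3)] unfolding d_def by argo
  define s where "s = (\<Sum>y\<in>I. A i y * v y)"
  define b where "b = - s / of_real d"
  have c1: "(\<Sum>x\<in>I. cnj (v x) * A x i) = cnj s"
    unfolding s_def using psd_herm[OF assms(1,2,3)] by (simp add: mult.commute)
  have c2: "(\<Sum>x\<in>I. cnj (v x) * w x) = cnj s / of_real (sqrt d)"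
    unfolding w_def d_def[symmetric] c1[symmetric] by (simp add: sum_divide_distrib)
  have c3: "(\<Sum>y\<in>I. cnj (w y) * v y) = s / of_real (sqrt d)"
    unfolding w_def d_def[symmetric] s_def using psd_herm[OF assms(1,2) _ assms(3)]
    by (simp add: sum_divide_distrib)
  have sq: "of_real (sqrt d) * of_real (sqrt d) = (of_real d :: complex)"
    using dpos by (simp flip: of_real_mult)
  have "qform I (\<lambda>x y. A x y - w x * cnj (w y)) v = qform I A (\<lambda>x. v x + (if x = i then b else 0))"
    unfolding qform_minus_outer qform_shift[OF assms(1,3)] c1 c2 c3 s_def[symmetric] Aii b_def
    using dpos sq by (simp add: field_simps)
  then show "Im (qform I (\<lambda>x y. A x y - w x * cnj (w y)) v) = 0 \<and>
      0 \<le> Re (qform I (\<lambda>x y. A x y - w x * cnj (w y)) v)"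
    using assms(2) unfolding psd_qform by simp
qed
lemma psd_decomp:
  assumes "finite I" "psd I A"
  shows "\<exists>W. \<forall>a\<in>I. \<forall>b\<in>I. A a b = (\<Sum>k\<in>I. W k a * cnj (W k b))"
  using assms
proof (induction I arbitrary: A rule: finite_induct)
  case empty then show ?case by simp
next
  case (insert i J A)
  let ?I = "insert i J"
  have fI: "finite ?I" using insert by simp
  have iI: "i \<in> ?I" by simp
  define w where "w = (\<lambda>x. if Re (A i i) > 0 then A x i / of_real (sqrt (Re (A i i))) else 0)"
  define B where "B = (\<lambda>x y. A x y - w x * cnj (w y))"
  have Bpsd: "psd ?I B"
  proof (cases "Re (A i i) > 0")
    case True
    then show ?thesis using psd_schur[OF fI insert.prems iI True] unfolding B_def w_def by simp
  next
    case False
    then show ?thesis using insert.prems unfolding B_def w_def by simp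
  qed
  have Brow: "B i y = 0" if "y \<in> ?I" for y
  proof (cases "Re (A i i) > 0")
    case True
    have Aii: "A i i = of_real (Re (A i i))" using psd_diag(1)[OF fI insert.prems iI] .
    have h: "cnj (A y i) = A i y" using psd_herm[OF fI insert.prems that iI] by simp
    have sq: "of_real (sqrt (Re (A i i))) * of_real (sqrt (Re (A i i))) = (of_real (Re (A i i)) :: complex)"
      using True by (simp flip: of_real_mult)
    have "w i * cnj (w y) = A i i * A i y / (of_real (sqrt (Re (A i i))) * of_real (sqrt (Re (A i i))))"
      unfolding w_def using True h by simp
    also have "\<dots> = A i y" unfolding sq using True by (subst Aii) simp
    finally show ?thesis unfolding B_def by simp
  next
    case False
    then have "A i i = 0" using psd_diag[OF fI insert.prems iI] by (simp add: complex_eq_iff)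
    then show ?thesis unfolding B_def w_def using False psd_zero_row[OF fI insert.prems iI that] by simp
  qed
  have Bcol: "B x i = 0" if "x \<in> ?I" for x
    using psd_herm[OF fI Bpsd iI that] Brow[OF that] by simp
  have "psd J B" using psd_subset[OF fI _ Bpsd] by blast
  then obtain W where W: "\<forall>a\<in>J. \<forall>b\<in>J. B a b = (\<Sum>k\<in>J. W k a * cnj (W k b))"
    using insert.IH by blast
  define W' where "W' = (\<lambda>k a. if k = i then w a else if a \<in> J then W k a else 0)"
  show ?case
  proof (intro exI ballI)
    fix a b assume a: "a \<in> ?I" and b: "b \<in> ?I"
    have "(\<Sum>k\<in>?I. W' k a * cnj (W' k b)) = w a * cnj (w b) + (\<Sum>k\<in>J. W' k a * cnj (W' k b))"
      using insert.hyps by (simp add: W'_def)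
    also have "(\<Sum>k\<in>J. W' k a * cnj (W' k b)) = B a b"
    proof (cases "a \<in> J \<and> b \<in> J")
      case True
      then show ?thesis using W insert.hyps by (auto simp: W'_def intro!: sum.cong)
    next
      case False
      then have "a = i \<or> b = i" using a b by auto
      then have "B a b = 0" using Brow Bcol a b by auto
      moreover have "(\<Sum>k\<in>J. W' k a * cnj (W' k b)) = 0"
        using False insert.hyps by (auto simp: W'_def intro!: sum.neutral)
      ultimately show ?thesis by simp
    qed
    finally show "A a b = (\<Sum>k\<in>?I. W' k a * cnj (W' k b))" unfolding B_def by simp
  qed
qed
definition psi :: "nat \<Rightarrow> ('z \<Rightarrow> 'k \<Rightarrow> 'q \<Rightarrow> complex) \<Rightarrow> (nat \<Rightarrow> 'z) \<Rightarrow> (nat \<Rightarrow> 'z) \<Rightarrow> (nat \<Rightarrow> 'k) \<Rightarrow> (nat \<Rightarrow> 'z \<times> 'q) \<Rightarrow> complex" where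
  "psi M W \<zeta> \<eta> \<kappa> f = (\<Prod>i<M. if fst (f i) = \<zeta> i then W (\<eta> i) (\<kappa> i) (snd (f i)) else 0)"

definition rhow :: "nat \<Rightarrow> ('z \<Rightarrow> 'z \<Rightarrow> real) \<Rightarrow> ('z \<Rightarrow> 'q \<Rightarrow> 'q \<Rightarrow> complex) \<Rightarrow> (nat \<Rightarrow> 'z \<times> 'q) \<Rightarrow> (nat \<Rightarrow> 'z \<times> 'q) \<Rightarrow> complex" where
  "rhow M wt \<rho> = (\<lambda>g f. \<Prod>i<M. if fst (g i) = fst (f i) then (\<Sum>y\<in>UNIV. of_real (wt (fst (g i)) y) * \<rho> y (snd (g i)) (snd (f i))) else 0)"

lemma sum_single:
  assumes "finite A" "z0 \<in> A" "\<And>z. z \<in> A \<Longrightarrow> z \<noteq> z0 \<Longrightarrow> h z = 0"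
  shows "sum h A = h z0"
  using assms by (simp add: sum.remove sum.neutral)

lemma rhow_entry:
  fixes W :: "'z::finite \<Rightarrow> 'k::finite \<Rightarrow> 'q::finite \<Rightarrow> complex"
  assumes dec: "\<And>y a b. \<rho> y a b = (\<Sum>k\<in>UNIV. W y k a * cnj (W y k b))"
  shows "rhow M wt \<rho> g f =
    (\<Sum>\<zeta>\<in>PiE {..<M} (\<lambda>_. UNIV). \<Sum>\<eta>\<in>PiE {..<M} (\<lambda>_. UNIV). \<Sum>\<kappa>\<in>PiE {..<M} (\<lambda>_. UNIV).
       of_real (\<Prod>i<M. wt (\<zeta> i) (\<eta> i)) * (psi M W \<zeta> \<eta> \<kappa> g * cnj (psi M W \<zeta> \<eta> \<kappa> f)))"
proof -
  define H where "H = (\<lambda>i z y k. of_real (wt z y) * ((if fst (g i) = z then W y k (snd (g i)) else 0) *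
      cnj (if fst (f i) = z then W y k (snd (f i)) else 0)))"
  have e1: "of_real (\<Prod>i<M. wt (\<zeta> i) (\<eta> i)) * (psi M W \<zeta> \<eta> \<kappa> g * cnj (psi M W \<zeta> \<eta> \<kappa> f))
     = (\<Prod>i<M. H i (\<zeta> i) (\<eta> i) (\<kappa> i))" for \<zeta> \<eta> \<kappa>
    unfolding H_def psi_def by (simp add: prod.distrib)
  have e2: "(\<Sum>\<kappa>\<in>PiE {..<M} (\<lambda>_. UNIV). \<Prod>i<M. H i (\<zeta> i) (\<eta> i) (\<kappa> i))
     = (\<Prod>i<M. \<Sum>k\<in>UNIV. H i (\<zeta> i) (\<eta> i) k)" for \<zeta> \<eta>
    by (rule prod_sum_PiE[symmetric]) auto
  have e3: "(\<Sum>\<eta>\<in>PiE {..<M} (\<lambda>_. UNIV). \<Prod>i<M. \<Sum>k\<in>UNIV. H i (\<zeta> i) (\<eta> i) k)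
     = (\<Prod>i<M. \<Sum>y\<in>UNIV. \<Sum>k\<in>UNIV. H i (\<zeta> i) y k)" for \<zeta>
    by (rule prod_sum_PiE[symmetric]) auto
  have e4: "(\<Sum>\<zeta>\<in>PiE {..<M} (\<lambda>_. UNIV). \<Prod>i<M. \<Sum>y\<in>UNIV. \<Sum>k\<in>UNIV. H i (\<zeta> i) y k)
     = (\<Prod>i<M. \<Sum>z\<in>UNIV. \<Sum>y\<in>UNIV. \<Sum>k\<in>UNIV. H i z y k)"
    by (rule prod_sum_PiE[symmetric]) auto
  have e5: "(\<Sum>z\<in>UNIV. \<Sum>y\<in>UNIV. \<Sum>k\<in>UNIV. H i z y k) =
     (if fst (g i) = fst (f i) then (\<Sum>y\<in>UNIV. of_real (wt (fst (g i)) y) * \<rho> y (snd (g i)) (snd (f i))) else 0)" for i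
  proof -
    have "(\<Sum>z\<in>UNIV. \<Sum>y\<in>UNIV. \<Sum>k\<in>UNIV. H i z y k) = (\<Sum>y\<in>UNIV. \<Sum>k\<in>UNIV. H i (fst (g i)) y k)"
      by (rule sum_single) (auto simp: H_def)
    also have "\<dots> = (if fst (g i) = fst (f i) then (\<Sum>y\<in>UNIV. of_real (wt (fst (g i)) y) * \<rho> y (snd (g i)) (snd (f i))) else 0)"
      unfolding H_def dec by (simp add: sum_distrib_left)
    finally show ?thesis .
  qed
  show ?thesis
    unfolding e1 e2 e3 e4 e5 rhow_def ..
qed

lemma trace_rhow:
  fixes W :: "'z::finite \<Rightarrow> 'k::finite \<Rightarrow> 'q::finite \<Rightarrow> complex"
  assumes dec: "\<And>y a b. \<rho> y a b = (\<Sum>k\<in>UNIV. W y k a * cnj (W y k b))"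
  shows "trace (basisM M) (mmult (basisM M) E (rhow M wt \<rho>)) =
    (\<Sum>\<zeta>\<in>PiE {..<M} (\<lambda>_. UNIV). \<Sum>\<eta>\<in>PiE {..<M} (\<lambda>_. UNIV).
       of_real (\<Prod>i<M. wt (\<zeta> i) (\<eta> i)) * (\<Sum>\<kappa>\<in>PiE {..<M} (\<lambda>_. UNIV). qform (basisM M) E (psi M W \<zeta> \<eta> \<kappa>)))"
proof -
  let ?B = "basisM M :: (nat \<Rightarrow> 'z \<times> 'q) set"
  let ?P = "PiE {..<M} (\<lambda>_. UNIV) :: (nat \<Rightarrow> 'z) set"
  let ?K = "PiE {..<M} (\<lambda>_. UNIV) :: (nat \<Rightarrow> 'k) set"
  let ?c = "\<lambda>\<zeta> \<eta>. of_real (\<Prod>i<M. wt (\<zeta> i) (\<eta> i)) :: complex"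
  have fB: "finite ?B" by (simp add: finite_PiE)
  have fP: "finite ?P" by (simp add: finite_PiE)
  have fK: "finite ?K" by (simp add: finite_PiE)
  have "trace ?B (mmult ?B E (rhow M wt \<rho>)) = (\<Sum>f\<in>?B. \<Sum>g\<in>?B. E f g * rhow M wt \<rho> g f)"
    unfolding trace_def mmult_def ..
  also have "\<dots> = (\<Sum>f\<in>?B. \<Sum>g\<in>?B. \<Sum>\<zeta>\<in>?P. \<Sum>\<eta>\<in>?P. \<Sum>\<kappa>\<in>?K.
       ?c \<zeta> \<eta> * (cnj (psi M W \<zeta> \<eta> \<kappa> f) * E f g * psi M W \<zeta> \<eta> \<kappa> g))"
    unfolding rhow_entry[OF dec] sum_distrib_left by (simp add: ac_simps)
  also have "\<dots> = (\<Sum>\<zeta>\<in>?P. \<Sum>\<eta>\<in>?P. \<Sum>\<kappa>\<in>?K. \<Sum>f\<in>?B. \<Sum>g\<in>?B.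
       ?c \<zeta> \<eta> * (cnj (psi M W \<zeta> \<eta> \<kappa> f) * E f g * psi M W \<zeta> \<eta> \<kappa> g))"
  proof -
    have s1: "(\<Sum>g\<in>?B. \<Sum>\<zeta>\<in>?P. \<Sum>\<eta>\<in>?P. \<Sum>\<kappa>\<in>?K. X g \<zeta> \<eta> \<kappa>) = (\<Sum>\<zeta>\<in>?P. \<Sum>\<eta>\<in>?P. \<Sum>\<kappa>\<in>?K. \<Sum>g\<in>?B. X g \<zeta> \<eta> \<kappa>)"
      for X :: "_ \<Rightarrow> _ \<Rightarrow> _ \<Rightarrow> _ \<Rightarrow> complex"
      by (subst sum.swap) (simp add: sum.swap[of _ ?B] sum.swap[of _ ?B ?K])
    show ?thesis by (simp only: s1)
  qed
  also have "\<dots> = (\<Sum>\<zeta>\<in>?P. \<Sum>\<eta>\<in>?P. ?c \<zeta> \<eta> * (\<Sum>\<kappa>\<in>?K. qform ?B E (psi M W \<zeta> \<eta> \<kappa>)))"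
    unfolding qform_def sum_distrib_left ..
  finally show ?thesis .
qed

lemma qform_idop: "finite I \<Longrightarrow> qform I idop v = (\<Sum>f\<in>I. cnj (v f) * v f)"
proof -
  assume "finite I"
  have "cnj (v i) * (if i = j then 1 else 0) * v j = (if i = j then cnj (v i) * v j else 0)" for i j :: 'a
    by simp
  then show ?thesis unfolding qform_def idop_def using \<open>finite I\<close> by (simp add: sum.delta)
qed
lemma qform_diff: "qform I (\<lambda>f g. A f g - B f g) v = qform I A v - qform I B v"
  unfolding qform_def by (simp add: algebra_simps sum_subtractf)

lemma norm_psi:
  fixes W :: "'z::finite \<Rightarrow> 'k::finite \<Rightarrow> 'q::finite \<Rightarrow> complex"
  assumes hW: "\<And>y. (\<Sum>a\<in>UNIV. \<Sum>k\<in>UNIV. W y k a * cnj (W y k a)) = 1"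
  shows "(\<Sum>\<kappa>\<in>PiE {..<M} (\<lambda>_. UNIV). qform (basisM M) idop (psi M W \<zeta> \<eta> \<kappa>)) = 1"
proof -
  define G where "G = (\<lambda>i (x :: 'z \<times> 'q) k. cnj (if fst x = \<zeta> i then W (\<eta> i) k (snd x) else 0) *
     (if fst x = \<zeta> i then W (\<eta> i) k (snd x) else 0))"
  have fB: "finite (basisM M :: (nat \<Rightarrow> 'z \<times> 'q) set)" by (simp add: finite_PiE)
  have "qform (basisM M) idop (psi M W \<zeta> \<eta> \<kappa>) = (\<Prod>i<M. \<Sum>x\<in>UNIV. G i x (\<kappa> i))" for \<kappa> :: "nat \<Rightarrow> 'k"
    unfolding qform_idop[OF fB] G_def psi_def
    by (subst prod_sum_PiE) (auto simp: prod.distrib)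
  then have "(\<Sum>\<kappa>\<in>PiE {..<M} (\<lambda>_. UNIV). qform (basisM M) idop (psi M W \<zeta> \<eta> \<kappa>))
     = (\<Prod>i<M. \<Sum>k\<in>UNIV. \<Sum>x\<in>UNIV. G i x k)"
    by (simp add: prod_sum_PiE)
  also have "\<dots> = (\<Prod>i<M. (1::complex))"
  proof (rule prod.cong[OF refl])
    fix i
    have "(\<Sum>x\<in>UNIV. G i x k) = (\<Sum>a\<in>UNIV. W (\<eta> i) k a * cnj (W (\<eta> i) k a))" for k
    proof -
      have "(\<Sum>x\<in>UNIV. G i x k) = (\<Sum>z\<in>UNIV. \<Sum>a\<in>UNIV. G i (z, a) k)"
        by (simp add: sum.cartesian_product flip: UNIV_Times_UNIV)
      also have "\<dots> = (\<Sum>a\<in>UNIV. G i (\<zeta> i, a) k)"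
        by (rule sum_single) (auto simp: G_def)
      finally show ?thesis by (simp add: G_def mult.commute)
    qed
    then show "(\<Sum>k\<in>UNIV. \<Sum>x\<in>UNIV. G i x k) = 1"
      using hW[of "\<eta> i"] sum.swap[of "\<lambda>k a. W (\<eta> i) k a * cnj (W (\<eta> i) k a)" UNIV UNIV] by simp
  qed
  finally show ?thesis by simp
qed

lemma relabel_in: "relabel M \<tau> f \<in> basisM M"
  unfolding relabel_def by simp

lemma relabel_inv:
  assumes "bij \<tau>" "f \<in> basisM M"
  shows "relabel M (inv \<tau>) (relabel M \<tau> f) = f"
proof
  fix i show "relabel M (inv \<tau>) (relabel M \<tau> f) i = f i"
  proof (cases "i < M")
    case True 
    have "inv \<tau> (\<tau> (fst (f i))) = fst (f i)" using assms(1) by (simp add: bij_is_inj)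
    then show ?thesis using True unfolding relabel_def by simp
  next
    case False
    have "f i = undefined" using PiE_arb[OF assms(2)] False by simp
    then show ?thesis using False unfolding relabel_def by simp
  qed
qed
lemma relabel_bij:
  fixes \<tau> :: "'z \<Rightarrow> 'z"
  assumes "bij \<tau>"
  shows "bij_betw (relabel M \<tau>) (basisM M :: (nat \<Rightarrow> 'z \<times> 'q) set) (basisM M)"
proof (rule bij_betw_byWitness[where f' = "relabel M (inv \<tau>)"])
  show "\<forall>a\<in>(basisM M :: (nat \<Rightarrow> 'z \<times> 'q) set). relabel M (inv \<tau>) (relabel M \<tau> a) = a" using relabel_inv[OF assms] by blast
  have bi: "bij (inv \<tau>)" using assms by (simp add: bij_imp_bij_inv)
  show "\<forall>a\<in>(basisM M :: (nat \<Rightarrow> 'z \<times> 'q) set). relabel M \<tau> (relabel M (inv \<tau>) a) = a"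
  proof (intro ballI)
    fix a :: "nat \<Rightarrow> 'z \<times> 'q" assume "a \<in> basisM M"
    from relabel_inv[OF bi this] show "relabel M \<tau> (relabel M (inv \<tau>) a) = a"
      unfolding inv_inv_eq[OF assms] .
  qed
  show "relabel M \<tau> ` (basisM M :: (nat \<Rightarrow> 'z \<times> 'q) set) \<subseteq> basisM M" using relabel_in by blast
  show "relabel M (inv \<tau>) ` (basisM M :: (nat \<Rightarrow> 'z \<times> 'q) set) \<subseteq> basisM M" using relabel_in by blast
qed

lemma reindex2:
  assumes "bij_betw h S S"
  shows "(\<Sum>f\<in>S. \<Sum>g\<in>S. F (h f) (h g)) = (\<Sum>f\<in>S. \<Sum>g\<in>S. F f g)"
proof -
  have r: "\<And>G. (\<Sum>x\<in>S. G (h x)) = (\<Sum>x\<in>S. G x)" using sum.reindex_bij_betw[OF assms] by blast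
  have "(\<Sum>f\<in>S. \<Sum>g\<in>S. F (h f) (h g)) = (\<Sum>f\<in>S. \<Sum>g\<in>S. F (h f) g)" by (simp only: r)
  also have "\<dots> = (\<Sum>f\<in>S. \<Sum>g\<in>S. F f g)" using r[of "\<lambda>f. \<Sum>g\<in>S. F f g"] .
  finally show ?thesis .
qed

lemma qform_psi_perm:
  fixes EE :: "(nat \<Rightarrow> 'z \<times> 'q) \<Rightarrow> (nat \<Rightarrow> 'z \<times> 'q) \<Rightarrow> complex"
  assumes inv: "\<And>f g. f \<in> basisM M \<Longrightarrow> g \<in> basisM M \<Longrightarrow> EE (relabel M \<tau> f) (relabel M \<tau> g) = EE f g"
    and "bij \<tau>"
  shows "qform (basisM M) EE (psi M W (\<lambda>i. \<tau> (\<zeta> i)) \<eta> \<kappa>) = qform (basisM M) EE (psi M W \<zeta> \<eta> \<kappa>)"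
proof -
  let ?B = "basisM M :: (nat \<Rightarrow> 'z \<times> 'q) set"
  have p: "psi M W (\<lambda>i. \<tau> (\<zeta> i)) \<eta> \<kappa> (relabel M \<tau> f) = psi M W \<zeta> \<eta> \<kappa> f" for f
    unfolding psi_def relabel_def using bij_is_inj[OF assms(2)]
    by (intro prod.cong refl) (auto simp: inj_eq)
  have "qform ?B EE (psi M W (\<lambda>i. \<tau> (\<zeta> i)) \<eta> \<kappa>) =
     (\<Sum>f\<in>?B. \<Sum>g\<in>?B. cnj (psi M W (\<lambda>i. \<tau> (\<zeta> i)) \<eta> \<kappa> (relabel M \<tau> f)) * EE (relabel M \<tau> f) (relabel M \<tau> g)
        * psi M W (\<lambda>i. \<tau> (\<zeta> i)) \<eta> \<kappa> (relabel M \<tau> g))"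
    unfolding qform_def
    by (rule reindex2[OF relabel_bij[OF assms(2)], symmetric])
  also have "\<dots> = qform ?B EE (psi M W \<zeta> \<eta> \<kappa>)"
    unfolding p qform_def by (intro sum.cong refl) (simp add: inv)
  finally show ?thesis .
qed

lemma E_invariant:
  fixes E1 :: "(nat \<Rightarrow> 'z::finite \<times> 'q::finite) \<Rightarrow> (nat \<Rightarrow> 'z \<times> 'q) \<Rightarrow> complex"
  assumes sym: "\<And>\<tau>. bij \<tau> \<Longrightarrow> \<forall>f\<in>basisM M. \<forall>g\<in>basisM M.
        mmult (basisM M) (mmult (basisM M) (perm_op M \<tau>) E1) (adjoint (perm_op M \<tau>)) f g = E1 f g"
    and "bij \<tau>" "f \<in> basisM M" "g \<in> basisM M"
  shows "E1 (relabel M \<tau> f) (relabel M \<tau> g) = E1 f g"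
proof -
  let ?B = "basisM M :: (nat \<Rightarrow> 'z \<times> 'q) set"
  have fB: "finite ?B" by (simp add: finite_PiE)
  define \<sigma> where "\<sigma> = inv \<tau>"
  have bs: "bij \<sigma>" unfolding \<sigma>_def using assms(2) by (simp add: bij_imp_bij_inv)
  have inv_s: "inv \<sigma> = \<tau>" unfolding \<sigma>_def using assms(2) by (simp add: inv_inv_eq)
  have key: "(h = relabel M \<sigma> j) \<longleftrightarrow> (j = relabel M \<tau> h)" if "h \<in> ?B" "j \<in> ?B" for h j
  proof
    assume "h = relabel M \<sigma> j"
    then show "j = relabel M \<tau> h" using relabel_inv[OF bs that(2)] unfolding inv_s by simp
  next
    assume "j = relabel M \<tau> h"
    then show "h = relabel M \<sigma> j" using relabel_inv[OF assms(2) that(1)] unfolding \<sigma>_def by simp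
  qed
  have s1: "(\<Sum>j\<in>?B. perm_op M \<sigma> h j * E1 j k) = E1 (relabel M \<tau> h) k" if "h \<in> ?B" for h k
  proof -
    have "(\<Sum>j\<in>?B. perm_op M \<sigma> h j * E1 j k) = perm_op M \<sigma> h (relabel M \<tau> h) * E1 (relabel M \<tau> h) k"
      by (rule sum_single[OF fB relabel_in]) (auto simp: perm_op_def key[OF that])
    then show ?thesis by (simp add: perm_op_def key[OF that relabel_in])
  qed
  have s2: "(\<Sum>k\<in>?B. X k * cnj (perm_op M \<sigma> h k)) = X (relabel M \<tau> h)" if "h \<in> ?B" for h X
  proof -
    have "(\<Sum>k\<in>?B. X k * cnj (perm_op M \<sigma> h k)) = X (relabel M \<tau> h) * cnj (perm_op M \<sigma> h (relabel M \<tau> h))"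
      by (rule sum_single[OF fB relabel_in]) (auto simp: perm_op_def key[OF that])
    then show ?thesis by (simp add: perm_op_def key[OF that relabel_in])
  qed
  have "mmult ?B (mmult ?B (perm_op M \<sigma>) E1) (adjoint (perm_op M \<sigma>)) f g = E1 f g"
    using sym[OF bs] assms(3,4) by blast
  then show ?thesis
    unfolding mmult_def adjoint_def using s1[OF assms(3)] s2[OF assms(4)] by simp
qed

lemma extend_perm:
  fixes \<zeta> \<zeta>' :: "nat \<Rightarrow> 'z::finite"
  assumes inj1: "inj_on \<zeta> {..<M}" and inj2: "inj_on \<zeta>' {..<M}"
  shows "\<exists>\<tau>. bij \<tau> \<and> (\<forall>i<M. \<tau> (\<zeta> i) = \<zeta>' i)"
proof -
  define A where "A = \<zeta> ` {..<M}"
  define A' where "A' = \<zeta>' ` {..<M}"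
  define \<sigma> where "\<sigma> = (\<lambda>x. \<zeta>' (the_inv_into {..<M} \<zeta> x))"
  have b1: "bij_betw (the_inv_into {..<M} \<zeta>) A {..<M}"
    unfolding A_def by (rule bij_betw_the_inv_into[OF inj_on_imp_bij_betw[OF inj1]])
  have b2: "bij_betw \<zeta>' {..<M} A'" unfolding A'_def by (rule inj_on_imp_bij_betw[OF inj2])
  have bs: "bij_betw \<sigma> A A'" unfolding \<sigma>_def using bij_betw_trans[OF b1 b2] by (simp add: comp_def)
  have cA: "card A = M" unfolding A_def using card_image[OF inj1] by simp
  have cA': "card A' = M" unfolding A'_def using card_image[OF inj2] by simp
  have "card (UNIV - A) = card (UNIV - A')"
    using cA cA' by (simp add: card_Diff_subset)
  then obtain h where bh: "bij_betw h (UNIV - A) (UNIV - A')"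
    using finite_same_card_bij[of "UNIV - A" "UNIV - A'"] by auto
  define \<tau> where "\<tau> = (\<lambda>x. if x \<in> A then \<sigma> x else h x)"
  have t1: "bij_betw \<tau> A A'" using bs by (rule bij_betw_cong[THEN iffD1, rotated]) (simp add: \<tau>_def)
  have t2: "bij_betw \<tau> (UNIV - A) (UNIV - A')" using bh by (rule bij_betw_cong[THEN iffD1, rotated]) (simp add: \<tau>_def)
  have "bij_betw \<tau> (A \<union> (UNIV - A)) (A' \<union> (UNIV - A'))"
    by (rule bij_betw_combine[OF t1 t2]) auto
  then have "bij \<tau>" by simp
  moreover have "\<tau> (\<zeta> i) = \<zeta>' i" if "i < M" for i
  proof -
    have "\<zeta> i \<in> A" unfolding A_def using that by simp
    then show ?thesis unfolding \<tau>_def \<sigma>_def using the_inv_into_f_f[OF inj1] that by simp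
  qed
  ultimately show ?thesis by blast
qed

lemma prod_two_cases:
  fixes g :: "nat \<Rightarrow> real"
  assumes "i < M" "j < M" "i \<noteq> j"
  shows "(\<Prod>k<M. if k = i \<or> k = j then g k else 1) = g i * g j"
proof -
  have "(\<Prod>k<M. if k = i \<or> k = j then g k else 1) = (\<Prod>k\<in>{..<M} \<inter> {k. k = i \<or> k = j}. g k) * (\<Prod>k\<in>{..<M} \<inter> - {k. k = i \<or> k = j}. 1)"
    by (rule prod.If_cases) simp
  also have "{..<M} \<inter> {k. k = i \<or> k = j} = {i, j}" using assms by auto
  finally show ?thesis using assms by simp
qed

lemma pair_prob:
  fixes p :: "'z::finite \<Rightarrow> real" and i j M :: nat
  assumes p_sum: "(\<Sum>z\<in>UNIV. p z) = 1" and "i < M" "j < M" "i \<noteq> j"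
  shows "(\<Sum>\<zeta>\<in>PiE {..<M} (\<lambda>_. UNIV). if \<zeta> i = \<zeta> j then (\<Prod>k<M. p (\<zeta> k)) else 0) = (\<Sum>z\<in>UNIV. p z ^ 2)"
proof -
  define F where "F = (\<lambda>z k y. p y * (if k = i \<or> k = j then (if y = z then 1 else 0) else 1))"
  have e1: "(if \<zeta> i = \<zeta> j then (\<Prod>k<M. p (\<zeta> k)) else 0) = (\<Sum>z\<in>UNIV. \<Prod>k<M. F z k (\<zeta> k))" for \<zeta> :: "nat \<Rightarrow> 'z"
  proof -
    have pt: "(\<Prod>k<M. F z k (\<zeta> k)) = (\<Prod>k<M. p (\<zeta> k)) * ((if \<zeta> i = z then 1 else 0) * (if \<zeta> j = z then 1 else 0))" for z
    proof -
      have "(\<Prod>k<M. F z k (\<zeta> k)) = (\<Prod>k<M. p (\<zeta> k)) * (\<Prod>k<M. if k = i \<or> k = j then (if \<zeta> k = z then 1 else 0) else 1)"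
        unfolding F_def prod.distrib by (intro arg_cong2[where f = "(*)"] prod.cong) auto
      also have "\<dots> = (\<Prod>k<M. p (\<zeta> k)) * ((if \<zeta> i = z then 1 else 0) * (if \<zeta> j = z then 1 else 0))"
        by (subst prod_two_cases[OF assms(2-4)]) simp
      finally show ?thesis .
    qed
    have "(\<Sum>z\<in>UNIV. \<Prod>k<M. F z k (\<zeta> k)) = (\<Sum>z\<in>UNIV. (\<Prod>k<M. p (\<zeta> k)) * ((if \<zeta> i = z then 1 else 0) * (if \<zeta> j = z then 1 else 0)))"
      by (simp only: pt)
    also have "\<dots> = (\<Prod>k<M. p (\<zeta> k)) * (if \<zeta> i = \<zeta> j then 1 else 0)"
      by (subst sum_single[of UNIV "\<zeta> i"]) auto
    finally show ?thesis by simp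
  qed
  have "(\<Sum>\<zeta>\<in>PiE {..<M} (\<lambda>_. UNIV). if \<zeta> i = \<zeta> j then (\<Prod>k<M. p (\<zeta> k)) else 0)
      = (\<Sum>z\<in>UNIV. \<Sum>\<zeta>\<in>PiE {..<M} (\<lambda>_. UNIV). \<Prod>k<M. F z k (\<zeta> k))"
    unfolding e1 by (rule sum.swap)
  also have "\<dots> = (\<Sum>z\<in>UNIV. \<Prod>k<M. \<Sum>y\<in>UNIV. F z k y)"
    by (simp add: prod_sum_PiE)
  also have "\<dots> = (\<Sum>z\<in>UNIV. \<Prod>k<M. if k = i \<or> k = j then p z else 1)"
  proof (intro sum.cong prod.cong refl)
    fix z k
    show "(\<Sum>y\<in>UNIV. F z k y) = (if k = i \<or> k = j then p z else 1)"
      by (cases "k = i \<or> k = j") (simp_all add: F_def p_sum if_distrib[of "\<lambda>x. p _ * x"] cong: if_cong)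
  qed
  also have "\<dots> = (\<Sum>z\<in>UNIV. p z ^ 2)"
    by (simp add: prod_two_cases[OF assms(2-4)] power2_eq_square)
  finally show ?thesis .
qed

lemma collision_bound:
  fixes p :: "'z::finite \<Rightarrow> real" and M :: nat
  assumes p_nonneg: "\<And>z. p z \<ge> 0" and p_sum: "(\<Sum>z\<in>UNIV. p z) = 1"
  shows "(\<Sum>\<zeta>\<in>PiE {..<M} (\<lambda>_. UNIV) - {\<zeta>. inj_on \<zeta> {..<M}}. \<Prod>k<M. p (\<zeta> k)) \<le> real M ^ 2 * (\<Sum>z\<in>UNIV. p z ^ 2)"
proof -
  let ?P = "PiE {..<M} (\<lambda>_. UNIV) :: (nat \<Rightarrow> 'z) set"
  define pw where "pw = (\<lambda>\<zeta> :: nat \<Rightarrow> 'z. \<Prod>k<M. p (\<zeta> k))"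
  define cnt where "cnt = (\<lambda>\<zeta> :: nat \<Rightarrow> 'z. \<Sum>i<M. \<Sum>j<M. if i \<noteq> j \<and> \<zeta> i = \<zeta> j then 1 else (0::real))"
  have pw0: "pw \<zeta> \<ge> 0" for \<zeta> unfolding pw_def by (simp add: prod_nonneg p_nonneg)
  have cnt0: "cnt \<zeta> \<ge> 0" for \<zeta> unfolding cnt_def by (simp add: sum_nonneg)
  have fP: "finite ?P" by (simp add: finite_PiE)
  have s1: "pw \<zeta> \<le> pw \<zeta> * cnt \<zeta>" if ninj: "\<not> inj_on \<zeta> {..<M}" for \<zeta>
  proof -
    obtain i j where ij: "i < M" "j < M" "i \<noteq> j" "\<zeta> i = \<zeta> j"
      using ninj unfolding inj_on_def by auto
    have "(1::real) \<le> (\<Sum>j'<M. if i \<noteq> j' \<and> \<zeta> i = \<zeta> j' then 1 else 0)"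
      using member_le_sum[of j "{..<M}" "\<lambda>j'. if i \<noteq> j' \<and> \<zeta> i = \<zeta> j' then 1 else (0::real)"] ij by simp
    also have "\<dots> \<le> cnt \<zeta>"
      unfolding cnt_def
      by (rule member_le_sum[of i "{..<M}" "\<lambda>i. \<Sum>j'<M. if i \<noteq> j' \<and> \<zeta> i = \<zeta> j' then 1 else (0::real)"])
         (use ij in \<open>auto intro: sum_nonneg\<close>)
    finally show ?thesis using pw0[of \<zeta>] by (simp add: mult_le_cancel_left1)
  qed
  have "(\<Sum>\<zeta>\<in>?P - {\<zeta>. inj_on \<zeta> {..<M}}. pw \<zeta>) \<le> (\<Sum>\<zeta>\<in>?P - {\<zeta>. inj_on \<zeta> {..<M}}. pw \<zeta> * cnt \<zeta>)"
    by (rule sum_mono) (use s1 in auto)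
  also have "\<dots> \<le> (\<Sum>\<zeta>\<in>?P. pw \<zeta> * cnt \<zeta>)"
    by (rule sum_mono2[OF fP]) (auto intro: mult_nonneg_nonneg pw0 cnt0)
  also have "\<dots> = (\<Sum>i<M. \<Sum>j<M. \<Sum>\<zeta>\<in>?P. if i \<noteq> j \<and> \<zeta> i = \<zeta> j then pw \<zeta> else 0)"
    unfolding cnt_def sum_distrib_left
    by (simp add: sum.swap[of _ ?P] if_distrib[of "\<lambda>x. pw _ * x"] cong: if_cong)
  also have "\<dots> = (\<Sum>i<M. \<Sum>j<M. if i \<noteq> j then (\<Sum>z\<in>UNIV. p z ^ 2) else 0)"
  proof (intro sum.cong refl)
    fix i j assume "i \<in> {..<M}" "j \<in> {..<M}"
    then show "(\<Sum>\<zeta>\<in>?P. if i \<noteq> j \<and> \<zeta> i = \<zeta> j then pw \<zeta> else 0) = (if i \<noteq> j then (\<Sum>z\<in>UNIV. p z ^ 2) else 0)"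
      using pair_prob[OF p_sum, of i M j] unfolding pw_def by auto
  qed
  also have "\<dots> \<le> (\<Sum>i<M. \<Sum>j<M. (\<Sum>z\<in>UNIV. p z ^ 2))"
    by (intro sum_mono) (auto intro: sum_nonneg)
  also have "\<dots> = real M ^ 2 * (\<Sum>z\<in>UNIV. p z ^ 2)" by (simp add: power2_eq_square)
  finally show ?thesis unfolding pw_def .
qed

lemma final_ineq:
  fixes pw :: "'a \<Rightarrow> real" and T :: "'a \<Rightarrow> 'a \<Rightarrow> real"
  assumes fP: "finite P" and DP: "D \<subseteq> P"
    and pw0: "\<And>x. x \<in> P \<Longrightarrow> pw x \<ge> 0" and pw1: "(\<Sum>x\<in>P. pw x) = 1"
    and T0: "\<And>x y. x \<in> P \<Longrightarrow> y \<in> P \<Longrightarrow> T x y \<ge> 0"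
    and T1: "\<And>x y. x \<in> P \<Longrightarrow> y \<in> P \<Longrightarrow> T x y \<le> 1"
    and Tsym: "\<And>x y. x \<in> D \<Longrightarrow> y \<in> D \<Longrightarrow> T x y = T y y"
    and K: "(\<Sum>x\<in>P - D. pw x) \<le> K"
  shows "(\<Sum>x\<in>P. pw x * T x x) - (\<Sum>x\<in>P. \<Sum>y\<in>P. pw x * pw y * T x y) \<le> 2 * K"
proof -
  have fD: "finite D" using fP DP finite_subset by blast
  define c where "c = (\<Sum>x\<in>P - D. pw x)"
  define S where "S = (\<Sum>x\<in>D. pw x * T x x)"
  have split: "(\<Sum>x\<in>P. g x) = (\<Sum>x\<in>P - D. g x) + (\<Sum>x\<in>D. g x)" for g :: "'a \<Rightarrow> real"
    by (rule sum.subset_diff[OF DP fP])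
  have c0: "c \<ge> 0" unfolding c_def using pw0 by (auto intro: sum_nonneg)
  have pD: "(\<Sum>x\<in>D. pw x) = 1 - c" using split[of pw] pw1 unfolding c_def by simp
  have S0: "S \<ge> 0" unfolding S_def using pw0 T0 DP by (auto intro!: sum_nonneg mult_nonneg_nonneg)
  have S1: "S \<le> 1 - c" unfolding S_def pD[symmetric]
    by (rule sum_mono, rule mult_left_le) (use pw0 T1 DP in auto)
  have t1: "(\<Sum>x\<in>P. pw x * T x x) \<le> S + c"
  proof -
    have "(\<Sum>x\<in>P - D. pw x * T x x) \<le> c" unfolding c_def
      by (rule sum_mono, rule mult_left_le) (use pw0 T1 in auto)
    then show ?thesis using split[of "\<lambda>x. pw x * T x x"] unfolding S_def by simp
  qed
  have t2: "(\<Sum>x\<in>P. \<Sum>y\<in>P. pw x * pw y * T x y) \<ge> (1 - c) * S"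
  proof -
    have "(\<Sum>x\<in>D. \<Sum>y\<in>D. pw x * pw y * T x y) \<le> (\<Sum>x\<in>D. \<Sum>y\<in>P. pw x * pw y * T x y)"
      by (intro sum_mono sum_mono2 fP DP) (use pw0 T0 DP in \<open>auto intro!: mult_nonneg_nonneg\<close>)
    also have "\<dots> \<le> (\<Sum>x\<in>P. \<Sum>y\<in>P. pw x * pw y * T x y)"
      by (intro sum_mono2 fP DP) (use pw0 T0 DP in \<open>auto intro!: mult_nonneg_nonneg sum_nonneg\<close>)
    finally have a: "(\<Sum>x\<in>D. \<Sum>y\<in>D. pw x * pw y * T x y) \<le> (\<Sum>x\<in>P. \<Sum>y\<in>P. pw x * pw y * T x y)" .
    have "(\<Sum>x\<in>D. \<Sum>y\<in>D. pw x * pw y * T x y) = (\<Sum>x\<in>D. \<Sum>y\<in>D. pw x * (pw y * T y y))"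
    proof (intro sum.cong refl)
      fix x y assume "x \<in> D" "y \<in> D"
      then have "T x y = T y y" by (rule Tsym)
      then show "pw x * pw y * T x y = pw x * (pw y * T y y)" by (simp add: mult.assoc)
    qed
    also have "\<dots> = (1 - c) * S" unfolding S_def pD[symmetric] sum_product ..
    finally show ?thesis using a by simp
  qed
  have "S \<le> 1" using S1 c0 by simp
  then have "c * S \<le> c" using c0 by (rule mult_left_le)
  then have "(\<Sum>x\<in>P. pw x * T x x) - (\<Sum>x\<in>P. \<Sum>y\<in>P. pw x * pw y * T x y) \<le> 2 * c"
    using t1 t2 by (simp add: algebra_simps)
  then show ?thesis using K unfolding c_def by simp
qed



theorem theorem2:
  fixes p :: "'z::finite \<Rightarrow> real"
    and \<rho> :: "'z \<Rightarrow> 'q::finite \<Rightarrow> 'q \<Rightarrow> complex"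
    and M :: nat
    and E1 :: "(nat \<Rightarrow> 'z \<times> 'q) \<Rightarrow> (nat \<Rightarrow> 'z \<times> 'q) \<Rightarrow> complex"
  assumes p_nonneg: "\<And>z. p z \<ge> 0"
    and p_sum: "(\<Sum>z\<in>UNIV. p z) = 1"
    and dens: "\<And>z. density UNIV (\<rho> z)"
    and M_pos: "M \<ge> 1"
    and E1_psd: "psd (basisM M) E1"
    and E2_psd: "psd (basisM M) (\<lambda>f g. idop f g - E1 f g)"
    and sym: "\<And>\<tau>. bij \<tau> \<Longrightarrow> \<forall>f\<in>basisM M. \<forall>g\<in>basisM M.
        mmult (basisM M) (mmult (basisM M) (perm_op M \<tau>) E1) (adjoint (perm_op M \<tau>)) f g = E1 f g"
  shows "(let \<rho>1 = tensor_pow M (cq_state p \<rho>);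
              \<rho>2 = tensor_pow M (cq_state p (\<lambda>_. avg_state p \<rho>));
              E2 = (\<lambda>f g. idop f g - E1 f g)
          in 1/2 * Re (trace (basisM M) (mmult (basisM M) E1 \<rho>1))
           + 1/2 * Re (trace (basisM M) (mmult (basisM M) E2 \<rho>2)))
         \<le> 1/2 + real M ^ 2 * (\<Sum>z\<in>UNIV. p z ^ 2)"
proof -
  let ?B = "basisM M :: (nat \<Rightarrow> 'z \<times> 'q) set"
  let ?P = "PiE {..<M} (\<lambda>_. UNIV) :: (nat \<Rightarrow> 'z) set"
  let ?K = "PiE {..<M} (\<lambda>_. UNIV) :: (nat \<Rightarrow> 'q) set"
  have fB: "finite ?B" by (simp add: finite_PiE)
  have fP: "finite ?P" by (simp add: finite_PiE)
  have "\<forall>z. \<exists>Wz :: 'q \<Rightarrow> 'q \<Rightarrow> complex. \<forall>a\<in>UNIV. \<forall>b\<in>UNIV. \<rho> z a b = (\<Sum>k\<in>UNIV. Wz k a * cnj (Wz k b))"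
  proof
    fix z
    have pz: "psd UNIV (\<rho> z)" using dens[of z] unfolding density_def by simp
    show "\<exists>Wz :: 'q \<Rightarrow> 'q \<Rightarrow> complex. \<forall>a\<in>UNIV. \<forall>b\<in>UNIV. \<rho> z a b = (\<Sum>k\<in>UNIV. Wz k a * cnj (Wz k b))"
      using psd_decomp[OF _ pz] by simp
  qed
  then obtain W :: "'z \<Rightarrow> 'q \<Rightarrow> 'q \<Rightarrow> complex"
    where W: "\<forall>z. \<forall>a\<in>UNIV. \<forall>b\<in>UNIV. \<rho> z a b = (\<Sum>k\<in>UNIV. W z k a * cnj (W z k b))"
    by (rule choice[THEN exE]) blast
  have dec: "\<rho> y a b = (\<Sum>k\<in>UNIV. W y k a * cnj (W y k b))" for y a b using W by blast
  have hW: "(\<Sum>a\<in>UNIV. \<Sum>k\<in>UNIV. W y k a * cnj (W y k a)) = 1" for y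
    using dens[of y] unfolding density_def trace_def dec by simp
  define wt1 where "wt1 = (\<lambda>z y. if y = z then p z else 0)"
  define wt2 where "wt2 = (\<lambda>z y. p z * p y)"
  have cq: "cq_state p \<sigma> x y = (if fst x = fst y then of_real (p (fst x)) * \<sigma> (fst x) (snd x) (snd y) else 0)" for \<sigma> x y
    by (cases x; cases y) (simp add: cq_state_def)
  have r1: "tensor_pow M (cq_state p \<rho>) = rhow M wt1 \<rho>"
  proof (intro ext)
    fix g f :: "nat \<Rightarrow> 'z \<times> 'q"
    have e: "(\<Sum>y\<in>UNIV. of_real (wt1 z y) * \<rho> y a b) = of_real (p z) * \<rho> z a b" for z a b
      by (subst sum_single[of UNIV z]) (auto simp: wt1_def)
    show "tensor_pow M (cq_state p \<rho>) g f = rhow M wt1 \<rho> g f"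
      unfolding tensor_pow_def rhow_def cq e ..
  qed
  have r2: "tensor_pow M (cq_state p (\<lambda>_. avg_state p \<rho>)) = rhow M wt2 \<rho>"
  proof (intro ext)
    fix g f :: "nat \<Rightarrow> 'z \<times> 'q"
    have e: "(\<Sum>y\<in>UNIV. of_real (wt2 z y) * \<rho> y a b) = of_real (p z) * avg_state p \<rho> a b" for z a b
      unfolding wt2_def avg_state_def by (simp add: sum_distrib_left mult.assoc)
    show "tensor_pow M (cq_state p (\<lambda>_. avg_state p \<rho>)) g f = rhow M wt2 \<rho> g f"
      unfolding tensor_pow_def rhow_def cq e ..
  qed
  define S where "S = (\<lambda>E \<zeta> \<eta>. \<Sum>\<kappa>\<in>?K. qform ?B E (psi M W \<zeta> \<eta> \<kappa>))"
  have S_app: "(\<Sum>\<kappa>\<in>?K. qform ?B E (psi M W \<zeta> \<eta> \<kappa>)) = S E \<zeta> \<eta>" for E \<zeta> \<eta>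
    by (simp add: S_def)
  define T where "T = (\<lambda>\<zeta> \<eta>. Re (S E1 \<zeta> \<eta>))"
  have S_real: "S E1 \<zeta> \<eta> = of_real (T \<zeta> \<eta>)" for \<zeta> \<eta>
  proof -
    have "Im (S E1 \<zeta> \<eta>) = 0" unfolding S_def Im_sum
      using E1_psd unfolding psd_qform by simp
    then show ?thesis unfolding T_def by (simp add: complex_eq_iff)
  qed
  have Sid: "S idop \<zeta> \<eta> = 1" for \<zeta> \<eta> unfolding S_def by (rule norm_psi[OF hW])
  have T0: "T \<zeta> \<eta> \<ge> 0" for \<zeta> \<eta>
    unfolding T_def S_def Re_sum using E1_psd unfolding psd_qform by (simp add: sum_nonneg)
  have T1: "T \<zeta> \<eta> \<le> 1" for \<zeta> \<eta>
  proof -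
    have "0 \<le> Re (S (\<lambda>f g. idop f g - E1 f g) \<zeta> \<eta>)"
      unfolding S_def Re_sum using E2_psd unfolding psd_qform by (simp add: sum_nonneg)
    also have "S (\<lambda>f g. idop f g - E1 f g) \<zeta> \<eta> = S idop \<zeta> \<eta> - S E1 \<zeta> \<eta>"
      unfolding S_def qform_diff sum_subtractf ..
    finally show ?thesis unfolding Sid T_def by simp
  qed
  have inv: "E1 (relabel M \<tau> f) (relabel M \<tau> g) = E1 f g" if "bij \<tau>" "f \<in> ?B" "g \<in> ?B" for \<tau> f g
    by (rule E_invariant[OF sym that])
  define D where "D = ?P \<inter> {\<zeta>. inj_on \<zeta> {..<M}}"
  have Tsym: "T \<zeta> \<eta> = T \<eta> \<eta>" if zD: "\<zeta> \<in> D" "\<eta> \<in> D" for \<zeta> \<eta>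
  proof -
    obtain \<tau> where \<tau>: "bij \<tau>" "\<forall>i<M. \<tau> (\<zeta> i) = \<eta> i"
      using extend_perm[of \<zeta> M \<eta>] zD unfolding D_def by auto
    have "psi M W \<eta> \<eta> \<kappa> = psi M W (\<lambda>i. \<tau> (\<zeta> i)) \<eta> \<kappa>" for \<kappa>
      unfolding psi_def using \<tau>(2) by (intro ext prod.cong refl) simp
    then have "S E1 \<eta> \<eta> = S E1 \<zeta> \<eta>"
      unfolding S_def
    proof (intro sum.cong refl)
      fix \<kappa> :: "nat \<Rightarrow> 'q"
      assume h: "\<And>\<kappa>. psi M W \<eta> \<eta> \<kappa> = psi M W (\<lambda>i. \<tau> (\<zeta> i)) \<eta> \<kappa>"
      show "qform ?B E1 (psi M W \<eta> \<eta> \<kappa>) = qform ?B E1 (psi M W \<zeta> \<eta> \<kappa>)"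
        unfolding h by (rule qform_psi_perm[where M = M and EE = E1 and \<tau> = \<tau>, OF inv[OF \<tau>(1)] \<tau>(1)])
    qed
    then show ?thesis unfolding T_def by simp
  qed
  define pw where "pw = (\<lambda>\<zeta> :: nat \<Rightarrow> 'z. \<Prod>i<M. p (\<zeta> i))"
  have pw0: "pw \<zeta> \<ge> 0" for \<zeta> unfolding pw_def by (simp add: prod_nonneg p_nonneg)
  have pw1: "(\<Sum>\<zeta>\<in>?P. pw \<zeta>) = 1"
    unfolding pw_def using prod_sum_PiE[of "{..<M}" "\<lambda>_. UNIV :: 'z set" "\<lambda>_ z. p z"] p_sum by simp
  have tr1: "Re (trace ?B (mmult ?B E1 (rhow M wt1 \<rho>))) = (\<Sum>\<zeta>\<in>?P. pw \<zeta> * T \<zeta> \<zeta>)"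
  proof -
    have inner: "(\<Sum>\<eta>\<in>?P. (\<Prod>i<M. wt1 (\<zeta> i) (\<eta> i)) * T \<zeta> \<eta>) = pw \<zeta> * T \<zeta> \<zeta>" if z: "\<zeta> \<in> ?P" for \<zeta>
    proof -
      have "(\<Sum>\<eta>\<in>?P. (\<Prod>i<M. wt1 (\<zeta> i) (\<eta> i)) * T \<zeta> \<eta>) = (\<Prod>i<M. wt1 (\<zeta> i) (\<zeta> i)) * T \<zeta> \<zeta>"
      proof (rule sum_single[OF fP z])
        fix \<eta> assume "\<eta> \<in> ?P" "\<eta> \<noteq> \<zeta>"
        then obtain i where i: "i < M" "\<zeta> i \<noteq> \<eta> i" using PiE_ext[OF z] by blast
        have "(\<Prod>i<M. wt1 (\<zeta> i) (\<eta> i)) = 0"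
          by (rule prod_zero) (use i in \<open>auto simp: wt1_def intro!: bexI[of _ i]\<close>)
        then show "(\<Prod>i<M. wt1 (\<zeta> i) (\<eta> i)) * T \<zeta> \<eta> = 0" by simp
      qed
      then show ?thesis unfolding pw_def wt1_def by simp
    qed
    have "trace ?B (mmult ?B E1 (rhow M wt1 \<rho>)) =
        of_real (\<Sum>\<zeta>\<in>?P. \<Sum>\<eta>\<in>?P. (\<Prod>i<M. wt1 (\<zeta> i) (\<eta> i)) * T \<zeta> \<eta>)"
      unfolding trace_rhow[OF dec] S_app S_real by simp
    then show ?thesis using inner by simp
  qed
  have tr2: "Re (trace ?B (mmult ?B (\<lambda>f g. idop f g - E1 f g) (rhow M wt2 \<rho>))) =
      1 - (\<Sum>\<zeta>\<in>?P. \<Sum>\<eta>\<in>?P. pw \<zeta> * pw \<eta> * T \<zeta> \<eta>)"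
  proof -
    have lin: "trace ?B (mmult ?B (\<lambda>f g. idop f g - E1 f g) R) = trace ?B (mmult ?B idop R) - trace ?B (mmult ?B E1 R)" for R
      unfolding trace_def mmult_def by (simp add: left_diff_distrib sum_subtractf)
    have w2: "(\<Prod>i<M. wt2 (\<zeta> i) (\<eta> i)) = pw \<zeta> * pw \<eta>" for \<zeta> \<eta>
      unfolding wt2_def pw_def by (simp add: prod.distrib)
    have a: "trace ?B (mmult ?B idop (rhow M wt2 \<rho>)) = 1"
    proof -
      have "trace ?B (mmult ?B idop (rhow M wt2 \<rho>)) = of_real (\<Sum>\<zeta>\<in>?P. \<Sum>\<eta>\<in>?P. pw \<zeta> * pw \<eta>)"
        unfolding trace_rhow[OF dec] S_app Sid w2 by simp
      also have "(\<Sum>\<zeta>\<in>?P. \<Sum>\<eta>\<in>?P. pw \<zeta> * pw \<eta>) = 1"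
        unfolding sum_product[symmetric] pw1 by simp
      finally show ?thesis by simp
    qed
    have b: "trace ?B (mmult ?B E1 (rhow M wt2 \<rho>)) = of_real (\<Sum>\<zeta>\<in>?P. \<Sum>\<eta>\<in>?P. pw \<zeta> * pw \<eta> * T \<zeta> \<eta>)"
      unfolding trace_rhow[OF dec] S_app S_real w2 by simp
    show ?thesis unfolding lin a b by simp
  qed
  have key: "(\<Sum>\<zeta>\<in>?P. pw \<zeta> * T \<zeta> \<zeta>) - (\<Sum>\<zeta>\<in>?P. \<Sum>\<eta>\<in>?P. pw \<zeta> * pw \<eta> * T \<zeta> \<eta>)
      \<le> 2 * (real M ^ 2 * (\<Sum>z\<in>UNIV. p z ^ 2))"
  proof (rule final_ineq[OF fP _ _ pw1])
    show "D \<subseteq> ?P" unfolding D_def by blast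
    have "?P - D = ?P - {\<zeta>. inj_on \<zeta> {..<M}}" unfolding D_def by blast
    then show "(\<Sum>x\<in>?P - D. pw x) \<le> real M ^ 2 * (\<Sum>z\<in>UNIV. p z ^ 2)"
      using collision_bound[OF p_nonneg p_sum, of M] unfolding pw_def by simp
    show "\<And>x. x \<in> ?P \<Longrightarrow> pw x \<ge> 0" by (rule pw0)
    show "\<And>x y. x \<in> ?P \<Longrightarrow> y \<in> ?P \<Longrightarrow> T x y \<ge> 0" by (rule T0)
    show "\<And>x y. x \<in> ?P \<Longrightarrow> y \<in> ?P \<Longrightarrow> T x y \<le> 1" by (rule T1)
    show "\<And>x y. x \<in> D \<Longrightarrow> y \<in> D \<Longrightarrow> T x y = T y y" by (rule Tsym)
  qed
  have aux: "(A::real) - B \<le> 2 * Q \<Longrightarrow> 1/2 * A + 1/2 * (1 - B) \<le> 1/2 + Q" for A B Q by (simp add: field_simps)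
  show ?thesis unfolding Let_def r1 r2 tr1 tr2 by (rule aux[OF key])
qed

end
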